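(* Let $\mu,\lambda$ be positive integers with $\lambda\ge e\mu$. Let $(X_t)_{t\ge0}$ and $(\Delta_t)_{t\ge0}$ be random processes such that for some $\Delta_{\min}\in(0,\lambda)$ we have $\Delta_t\ge\Delta_{\min}$ for all $t$, and for all $t\in\mathbb{N}$, conditionally on the history up to time $t$, $X_{t+1}$ has the law of $\min\{\mu,B\}$ with $B\sim\mathrm{Bin}\big(\lambda,\frac{X_t+\Delta_t}{e\mu}\big)$ (where it is assumed that $\frac{X_t+\Delta_t}{e\mu}\le1$). Let $X'$ satisfy $\max\{18\ln\frac{2\lambda}{\Delta_{\min}},48\}\le X'\le\frac{\mu}{2}$, and let $T(X')=\min\{t\ge0: X_t\ge X'\}$. Then \[E[T(X')]\le\max\Big\{24,\ \frac{4X'-2X_0}{\Delta_{\min}}\Big\}.\]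
   Context: $\mathrm{Bin}(m,p)$ denotes the binomial distribution with $m$ trials and success probability $p$. *)

theory Defs
  imports "HOL-Probability.Probability"
begin

definition capped_binomial_pmf :: "nat \<Rightarrow> nat \<Rightarrow> real \<Rightarrow> nat pmf" where
  "capped_binomial_pmf mu lam p = map_pmf (\<lambda>b. min mu b) (binomial_pmf lam p)"

definition hitting_time :: "(nat \<Rightarrow> 'a \<Rightarrow> nat) \<Rightarrow> real \<Rightarrow> 'a \<Rightarrow> ennreal" where
  "hitting_time X x' \<omega> =
     (if \<exists>t. x' \<le> real (X t \<omega>) then ennreal (real (LEAST t. x' \<le> real (X t \<omega>))) else \<top>)"

end

theory Submission
  imports Defs
begin


lemma binom_exp_sum:
  assumes p: "p \<in> {0..1}"
  shows "measure_pmf.expectation (binomial_pmf n p) f =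
         (\<Sum>k\<le>n. real (n choose k) * p ^ k * (1 - p) ^ (n - k) * f k)"
  using expectation_binomial_pmf'[OF p, of n f] by simp

lemma binom_mgf:
  assumes p: "p \<in> {0..1}"
  shows "measure_pmf.expectation (binomial_pmf n p) (\<lambda>k. exp (t * real k)) = (p * exp t + (1 - p)) ^ n"
proof -
  have "measure_pmf.expectation (binomial_pmf n p) (\<lambda>k. exp (t * real k))
     = (\<Sum>k\<le>n. real (n choose k) * (p * exp t) ^ k * (1 - p) ^ (n - k))"
    unfolding binom_exp_sum[OF p]
    by (intro sum.cong refl) (simp add: power_mult_distrib exp_of_nat_mult[symmetric] mult_ac)
  also have "\<dots> = (p * exp t + (1 - p)) ^ n"
    by (subst binomial_ring) (simp add: atLeast0AtMost)
  finally show ?thesis .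
qed

lemma binom_mean:
  assumes p: "p \<in> {0..1}"
  shows "measure_pmf.expectation (binomial_pmf n p) real = real n * p"
proof (cases n)
  case 0 then show ?thesis by (simp add: binom_exp_sum[OF p])
next
  case (Suc m)
  have "measure_pmf.expectation (binomial_pmf n p) real
     = (\<Sum>k\<le>Suc m. real (Suc m choose k) * p ^ k * (1 - p) ^ (Suc m - k) * real k)"
    by (simp add: binom_exp_sum[OF p] Suc)
  also have "\<dots> = (\<Sum>k\<le>m. real (Suc m choose Suc k) * p ^ Suc k * (1 - p) ^ (Suc m - Suc k) * real (Suc k))"
    by (subst sum.atMost_Suc_shift) simp
  also have "\<dots> = (\<Sum>k\<le>m. real (Suc m) * p * (real (m choose k) * p ^ k * (1 - p) ^ (m - k)))"
  proof (intro sum.cong refl)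
    fix k assume "k \<in> {..m}"
    have "real (Suc m choose Suc k) * real (Suc k) = real (Suc m) * real (m choose k)"
      using arg_cong[OF Suc_times_binomial[of k m], of real] by (simp only: of_nat_mult mult.commute)
    then show "real (Suc m choose Suc k) * p ^ Suc k * (1 - p) ^ (Suc m - Suc k) * real (Suc k) =
          real (Suc m) * p * (real (m choose k) * p ^ k * (1 - p) ^ (m - k))"
    proof -
      have "real (Suc m choose Suc k) * p ^ Suc k * (1 - p) ^ (Suc m - Suc k) * real (Suc k)
          = (real (Suc m choose Suc k) * real (Suc k)) * p * (p ^ k * (1 - p) ^ (m - k))"
        by (simp only: power_Suc diff_Suc_Suc mult_ac)
      also have "\<dots> = real (Suc m) * p * (real (m choose k) * p ^ k * (1 - p) ^ (m - k))"
        unfolding \<open>real (Suc m choose Suc k) * real (Suc k) = real (Suc m) * real (m choose k)\<close>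
        by (simp only: mult_ac)
      finally show ?thesis .
    qed
  qed
  also have "\<dots> = real (Suc m) * p * (p + (1 - p)) ^ m"
    by (subst binomial_ring) (simp add: atLeast0AtMost sum_distrib_left)
  finally show ?thesis by (simp add: Suc)
qed

lemma binom_mgf_le:
  assumes p: "p \<in> {0..1}"
  shows "measure_pmf.expectation (binomial_pmf n p) (\<lambda>k. exp (t * real k)) \<le> exp (real n * p * (exp t - 1))"
proof -
  have "(p * exp t + (1 - p)) ^ n = (1 + p * (exp t - 1)) ^ n" by (simp add: algebra_simps)
  also have "\<dots> \<le> exp (p * (exp t - 1)) ^ n"
  proof (rule power_mono)
    show "1 + p * (exp t - 1) \<le> exp (p * (exp t - 1))" by (rule exp_ge_add_one_self)
    have "0 \<le> p * exp t" using p by simp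
    moreover have "1 + p * (exp t - 1) = (1 - p) + p * exp t" by (simp add: algebra_simps)
    moreover have "p \<le> 1" using p by simp
    ultimately show "0 \<le> 1 + p * (exp t - 1)" by linarith
  qed
  also have "\<dots> = exp (real n * p * (exp t - 1))"
    by (simp add: exp_of_nat_mult[symmetric] mult_ac)
  finally show ?thesis by (simp add: binom_mgf[OF p])
qed

lemma pos_part_exp_bound:
  assumes "s > 0"
  shows "max (y::real) 0 \<le> exp (s * y) / (s * exp 1)"
proof -
  have "s * y \<le> exp (s * y - 1)" using exp_ge_add_one_self[of "s*y - 1"] by simp
  also have "\<dots> = exp (s * y) / exp 1" by (simp add: exp_diff)
  finally have "y \<le> exp (s * y) / (s * exp 1)" using assms
    by (simp add: field_simps)
  moreover have "0 \<le> exp (s * y) / (s * exp 1)" using assms by simp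
  ultimately show ?thesis by simp
qed

lemma binom_upper_tail:
  assumes p: "p \<in> {0..1}" and s: "s > 0"
  shows "measure_pmf.expectation (binomial_pmf n p) (\<lambda>k. max (real k - c) 0)
         \<le> exp (- s * c) / (s * exp 1) * exp (real n * p * (exp s - 1))"
proof -
  have "measure_pmf.expectation (binomial_pmf n p) (\<lambda>k. max (real k - c) 0)
      \<le> measure_pmf.expectation (binomial_pmf n p) (\<lambda>k. exp (- s * c) / (s * exp 1) * exp (s * real k))"
    apply (rule integral_mono)
    using p apply simp
    using p apply simp
    using pos_part_exp_bound[OF s, of "real _ - c"] by (simp add: exp_diff exp_minus field_simps right_diff_distrib)
  also have "\<dots> = exp (- s * c) / (s * exp 1) * measure_pmf.expectation (binomial_pmf n p) (\<lambda>k. exp (s * real k))"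
    by simp
  also have "\<dots> \<le> exp (- s * c) / (s * exp 1) * exp (real n * p * (exp s - 1))"
    using s by (intro mult_left_mono binom_mgf_le[OF p]) auto
  finally show ?thesis .
qed

lemma binom_lower_tail:
  assumes p: "p \<in> {0..1}" and s: "s > 0"
  shows "measure_pmf.expectation (binomial_pmf n p) (\<lambda>k. max (a - real k) 0)
         \<le> exp (s * a) / (s * exp 1) * exp (real n * p * (exp (-s) - 1))"
proof -
  have "measure_pmf.expectation (binomial_pmf n p) (\<lambda>k. max (a - real k) 0)
      \<le> measure_pmf.expectation (binomial_pmf n p) (\<lambda>k. exp (s * a) / (s * exp 1) * exp (-s * real k))"
    apply (rule integral_mono)
    using p apply simp
    using p apply simp
    using pos_part_exp_bound[OF s, of "a - real _"] by (simp add: exp_diff exp_minus field_simps right_diff_distrib)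
  also have "\<dots> = exp (s * a) / (s * exp 1) * measure_pmf.expectation (binomial_pmf n p) (\<lambda>k. exp (-s * real k))"
    by simp
  also have "\<dots> \<le> exp (s * a) / (s * exp 1) * exp (real n * p * (exp (-s) - 1))"
    using s by (intro mult_left_mono binom_mgf_le[OF p]) auto
  finally show ?thesis .
qed



lemma e_ge: "exp 1 \<ge> (5/2::real)"
  using exp_lower_Taylor_quadratic[of 1] by simp

lemma drift_pmf:
  fixes mu lam x :: nat and D Dmin X' :: real
  assumes x: "real x < X'" and Dmin: "Dmin > 0" "D \<ge> Dmin"
    and p1: "(real x + D) / (exp 1 * real mu) \<le> 1"
    and lam: "real lam \<ge> exp 1 * real mu" and mu: "mu > 0"
    and X48: "X' \<ge> 48" and Xmu: "2 * X' \<le> real mu"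
    and tail: "exp (- X' / 18) \<le> Dmin / (2 * real lam)"
    and lam3: "real lam \<ge> 3"
  shows "measure_pmf.expectation (capped_binomial_pmf mu lam ((real x + D) / (exp 1 * real mu)))
           (\<lambda>k. min (real k) (2 * X')) \<ge> real x + min (Dmin / 2) (X' / 12)"
proof -
  define p where "p = (real x + D) / (exp 1 * real mu)"
  define c where "c = 2 * X'"
  define m where "m = real lam * p"
  have e: "exp 1 \<ge> (5/2::real)" by (rule e_ge)
  have emu: "exp 1 * real mu > 0" using mu by simp
  have p0: "p \<ge> 0" unfolding p_def using emu Dmin by (intro divide_nonneg_pos) auto
  have p: "p \<in> {0..1}" using p0 p1 unfolding p_def by auto
  have m_ge: "m \<ge> real x + D"
  proof -
    have "m = (real lam / (exp 1 * real mu)) * (real x + D)" unfolding m_def p_def by simp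
    moreover have "real lam / (exp 1 * real mu) \<ge> 1" using lam emu by simp
    moreover have "real x + D \<ge> 0" using Dmin by simp
    ultimately show ?thesis by (metis mult_le_cancel_right1 order.refl mult.commute mult_right_mono mult_1)
  qed
  have E_eq: "measure_pmf.expectation (capped_binomial_pmf mu lam p) (\<lambda>k. min (real k) c)
      = measure_pmf.expectation (binomial_pmf lam p) (\<lambda>k. min (real k) c)"
  proof -
    have "(\<lambda>k. min (real (min mu k)) c) = (\<lambda>k. min (real k) c)"
      using Xmu by (auto simp: fun_eq_iff c_def min_def)
    then show ?thesis unfolding capped_binomial_pmf_def integral_map_pmf by simp
  qed
  have "measure_pmf.expectation (binomial_pmf lam p) (\<lambda>k. min (real k) c) \<ge> real x + min (Dmin / 2) (X' / 12)"
  proof (cases "m \<le> 13/10 * X'")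
    case True
    have "measure_pmf.expectation (binomial_pmf lam p) (\<lambda>k. min (real k) c)
        = measure_pmf.expectation (binomial_pmf lam p) (\<lambda>k. real k - max (real k - c) 0)"
      by (rule arg_cong[where f="measure_pmf.expectation (binomial_pmf lam p)"]) (auto simp: fun_eq_iff)
    also have "\<dots> = m - measure_pmf.expectation (binomial_pmf lam p) (\<lambda>k. max (real k - c) 0)"
      using p by (subst Bochner_Integration.integral_diff) (auto simp: binom_mean m_def)
    finally have eq: "measure_pmf.expectation (binomial_pmf lam p) (\<lambda>k. min (real k) c)
        = m - measure_pmf.expectation (binomial_pmf lam p) (\<lambda>k. max (real k - c) 0)" .
    have tl: "measure_pmf.expectation (binomial_pmf lam p) (\<lambda>k. max (real k - c) 0)
        \<le> exp (- (1/5) * c) / ((1/5) * exp 1) * exp (real lam * p * (exp (1/5) - 1))"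
      by (rule binom_upper_tail[OF p]) simp
    have e5': "exp (1/5::real) \<le> 1 + 1/5 + (1/5)^2" by (rule exp_bound) auto
    have e5: "exp (1/5::real) - 1 \<le> 6/25" using e5' by (simp add: power2_eq_square)
    have "real lam * p * (exp (1/5) - 1) \<le> m * (6/25)"
      unfolding m_def using e5 p0 by (intro mult_left_mono) auto
    also have "\<dots> \<le> 13/10 * X' * (6/25)" using True by simp
    finally have "- (1/5) * c + real lam * p * (exp (1/5) - 1) \<le> - X' / 18"
      unfolding c_def using X48 by simp
    hence "exp (- (1/5) * c) * exp (real lam * p * (exp (1/5) - 1)) \<le> exp (- X' / 18)"
      by (simp add: exp_add[symmetric])
    also have "\<dots> \<le> Dmin / (2 * real lam)" by (rule tail)
    finally have A: "exp (- (1/5) * c) * exp (real lam * p * (exp (1/5) - 1)) \<le> Dmin / (2 * real lam)" .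
    have "2 * exp 1 \<le> real lam * exp 1" using lam3 by (intro mult_right_mono) auto
    hence "5 \<le> real lam * exp 1" using e by linarith
    hence B: "5 / exp 1 \<le> real lam" by (simp add: divide_le_eq)
    have "exp (- (1/5) * c) / ((1/5) * exp 1) * exp (real lam * p * (exp (1/5) - 1))
        = (5 / exp 1) * (exp (- (1/5) * c) * exp (real lam * p * (exp (1/5) - 1)))" by simp
    also have "\<dots> \<le> real lam * (Dmin / (2 * real lam))"
      using A B by (intro mult_mono) auto
    also have "\<dots> = Dmin / 2" using lam3 by simp
    finally have "measure_pmf.expectation (binomial_pmf lam p) (\<lambda>k. max (real k - c) 0) \<le> Dmin / 2"
      using tl by linarith
    then show ?thesis using eq m_ge Dmin by linarith
  next
    case False
    define a where "a = 23/20 * X'"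
    have "measure_pmf.expectation (binomial_pmf lam p) (\<lambda>k. min (real k) c)
        \<ge> measure_pmf.expectation (binomial_pmf lam p) (\<lambda>k. a - max (a - real k) 0)"
      using p X48 by (intro integral_mono) (auto simp: a_def c_def)
    also have "measure_pmf.expectation (binomial_pmf lam p) (\<lambda>k. a - max (a - real k) 0)
        = a - measure_pmf.expectation (binomial_pmf lam p) (\<lambda>k. max (a - real k) 0)"
      using p by (subst Bochner_Integration.integral_diff) auto
    finally have ge: "measure_pmf.expectation (binomial_pmf lam p) (\<lambda>k. min (real k) c)
        \<ge> a - measure_pmf.expectation (binomial_pmf lam p) (\<lambda>k. max (a - real k) 0)" .
    have tl: "measure_pmf.expectation (binomial_pmf lam p) (\<lambda>k. max (a - real k) 0)
        \<le> exp ((1/8) * a) / ((1/8) * exp 1) * exp (real lam * p * (exp (- (1/8)) - 1))"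
      by (rule binom_lower_tail[OF p]) simp
    have e8: "exp (- (1/8::real)) \<le> 8/9"
    proof -
      have "9/8 \<le> exp (1/8::real)" using exp_ge_add_one_self[of "1/8::real"] by simp
      then have "inverse (exp (1/8::real)) \<le> inverse (9/8)" by (intro le_imp_inverse_le) auto
      then show ?thesis by (simp add: exp_minus)
    qed
    have "real lam * p * (exp (- (1/8)) - 1) \<le> m * (- 1/9)"
      unfolding m_def using e8 p0 by (intro mult_left_mono) auto
    also have "\<dots> \<le> 13/10 * X' * (- 1/9)" using False by simp
    finally have "(1/8) * a + real lam * p * (exp (- (1/8)) - 1) \<le> 0"
      unfolding a_def using X48 by simp
    hence "exp ((1/8) * a) * exp (real lam * p * (exp (- (1/8)) - 1)) \<le> 1"
      by (simp add: exp_add[symmetric])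
    moreover have "8 / exp 1 \<le> (16/5::real)" using e by (simp add: field_simps)
    ultimately have "(8 / exp 1) * (exp ((1/8) * a) * exp (real lam * p * (exp (- (1/8)) - 1))) \<le> 16/5 * 1"
      by (intro mult_mono) auto
    hence "measure_pmf.expectation (binomial_pmf lam p) (\<lambda>k. max (a - real k) 0) \<le> 16/5"
      using tl by simp
    then show ?thesis using ge x X48 unfolding a_def by linarith
  qed
  then show ?thesis using E_eq unfolding p_def c_def by simp
qed



lemma pmf_suminf_expect:
  fixes q :: "nat pmf" and g :: "nat \<Rightarrow> real"
  assumes g0: "\<And>k. 0 \<le> g k" and gB: "\<And>k. g k \<le> B"
  shows "(\<Sum>k. ennreal (g k * pmf q k)) = ennreal (measure_pmf.expectation q g)"
proof -
  have int: "integrable (measure_pmf q) g"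
    by (rule measure_pmf.integrable_const_bound[where B=B]) (use g0 gB in auto)
  have "ennreal (measure_pmf.expectation q g) = (\<integral>\<^sup>+k. ennreal (g k) \<partial>measure_pmf q)"
    by (rule nn_integral_eq_integral[symmetric]) (use int g0 in auto)
  also have "\<dots> = (\<integral>\<^sup>+k. ennreal (pmf q k) * ennreal (g k) \<partial>count_space UNIV)"
    by (rule nn_integral_measure_pmf)
  also have "\<dots> = (\<Sum>k. ennreal (pmf q k) * ennreal (g k))"
    by (rule nn_integral_count_space_nat)
  also have "\<dots> = (\<Sum>k. ennreal (g k * pmf q k))"
    by (intro suminf_cong) (simp add: ennreal_mult g0 mult.commute)
  finally show ?thesis by simp
qed

lemma hitting_sum:
  "hitting_time X x' \<omega> = (\<Sum>t. indicator {\<omega>. \<forall>s\<le>t. real (X s \<omega>) < x'} \<omega> :: ennreal)"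
proof (cases "\<exists>t. x' \<le> real (X t \<omega>)")
  case True
  define T where "T = (LEAST t. x' \<le> real (X t \<omega>))"
  have iff: "(\<forall>s\<le>t. real (X s \<omega>) < x') \<longleftrightarrow> t < T" for t
  proof
    assume h: "\<forall>s\<le>t. real (X s \<omega>) < x'"
    show "t < T"
    proof (rule ccontr)
      assume "\<not> t < T"
      hence "T \<le> t" by simp
      moreover have "x' \<le> real (X T \<omega>)" unfolding T_def using True by (rule LeastI_ex)
      ultimately show False using h by force
    qed
  next
    assume "t < T"
    then show "\<forall>s\<le>t. real (X s \<omega>) < x'"
      using not_less_Least[of _ "\<lambda>t. x' \<le> real (X t \<omega>)"] unfolding T_def
      by (meson le_less_trans not_le)
  qed
  have "(\<Sum>t. indicator {\<omega>. \<forall>s\<le>t. real (X s \<omega>) < x'} \<omega> :: ennreal)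
      = (\<Sum>t\<in>{..<T}. indicator {\<omega>. \<forall>s\<le>t. real (X s \<omega>) < x'} \<omega>)"
    by (rule suminf_finite) (auto simp: iff indicator_def)
  also have "\<dots> = (\<Sum>t\<in>{..<T}. 1)"
    by (intro sum.cong) (auto simp: iff indicator_def)
  also have "\<dots> = of_nat T" by simp
  finally show ?thesis
    using True unfolding hitting_time_def T_def by (simp add: ennreal_of_nat_eq_real_of_nat)
next
  case False
  hence "indicator {\<omega>. \<forall>s\<le>t. real (X s \<omega>) < x'} \<omega> = (1::ennreal)" for t
    by (auto simp: indicator_def not_le)
  hence "(\<Sum>t. indicator {\<omega>. \<forall>s\<le>t. real (X s \<omega>) < x'} \<omega> :: ennreal) = (\<Sum>t::nat. 1)" by simp
  also have "\<dots> = top"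
    unfolding suminf_eq_SUP by (simp add: ennreal_SUP_of_nat_eq_top)
  finally show ?thesis using False unfolding hitting_time_def by simp
qed



theorem lemma7:
  fixes M :: "'a measure"
    and F :: "nat \<Rightarrow> 'a measure"
    and X :: "nat \<Rightarrow> 'a \<Rightarrow> nat"
    and \<Delta> :: "nat \<Rightarrow> 'a \<Rightarrow> real"
    and mu lam x0 :: nat
    and \<Delta>min X' :: real
  assumes "prob_space M"
    and "\<And>t. subalgebra M (F t)"
    and "\<And>s t. s \<le> t \<Longrightarrow> sets (F s) \<subseteq> sets (F t)"
    and "\<And>t. X t \<in> measurable (F t) (count_space UNIV)"
    and "\<And>t. \<Delta> t \<in> borel_measurable (F t)"
    and "mu > 0" and "lam > 0"
    and "real lam \<ge> exp 1 * real mu"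
    and "0 < \<Delta>min" and "\<Delta>min < real lam"
    and "\<And>t \<omega>. \<omega> \<in> space M \<Longrightarrow> \<Delta> t \<omega> \<ge> \<Delta>min"
    and "\<And>t \<omega>. \<omega> \<in> space M \<Longrightarrow> (real (X t \<omega>) + \<Delta> t \<omega>) / (exp 1 * real mu) \<le> 1"
    and "\<And>\<omega>. \<omega> \<in> space M \<Longrightarrow> X 0 \<omega> = x0"
    and "\<And>t k. AE \<omega> in M.
           real_cond_exp M (F t) (\<lambda>\<omega>. indicator {\<omega>. X (Suc t) \<omega> = k} \<omega>) \<omega>
         = pmf (capped_binomial_pmf mu lam ((real (X t \<omega>) + \<Delta> t \<omega>) / (exp 1 * real mu))) k"
    and "max (18 * ln (2 * real lam / \<Delta>min)) 48 \<le> X'"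
    and "X' \<le> real mu / 2"
  shows "(\<integral>\<^sup>+ \<omega>. hitting_time X X' \<omega> \<partial>M)
           \<le> ennreal (max 24 ((4 * X' - 2 * real x0) / \<Delta>min))"
proof -
  interpret P: prob_space M by (rule assms(1))
  note subalg = assms(2)
  have sfs: "sigma_finite_subalgebra M (F t)" for t
    by (rule finite_measure_subalgebra_is_sigma_finite)
       (simp add: finite_measure_subalgebra_def finite_measure_subalgebra_axioms_def
          P.finite_measure_axioms subalg)
  have spF: "space (F t) = space M" for t using subalg[of t] by (simp add: subalgebra_def)
  have XF: "X s \<in> measurable (F t) (count_space UNIV)" if "s \<le> t" for s t
  proof -
    have "X s \<in> measurable (F s) (count_space UNIV)" by (rule assms(4))
    then show ?thesis using assms(3)[OF that] spF
      unfolding measurable_def by auto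
  qed
  have XM[measurable]: "X t \<in> measurable M (count_space UNIV)" for t
    by (rule measurable_from_subalg[OF subalg assms(4)])
  have DM[measurable]: "\<Delta> t \<in> borel_measurable M" for t
    by (rule measurable_from_subalg[OF subalg assms(5)])
  have X48: "X' \<ge> 48" and Xln: "18 * ln (2 * real lam / \<Delta>min) \<le> X'" using assms(15) by auto
  have Xmu: "2 * X' \<le> real mu" using assms(16) by simp
  have lam3: "real lam \<ge> 3"
  proof -
    have "exp 1 * real mu \<ge> 5/2 * 1" using e_ge assms(6) by (intro mult_mono) auto
    hence "real lam > 2" using assms(8) by linarith
    hence "lam > 2" by simp
    thus ?thesis by simp
  qed
  have tail: "exp (- X' / 18) \<le> \<Delta>min / (2 * real lam)"
  proof -
    have pos: "2 * real lam / \<Delta>min > 0" using assms(9) lam3 by simp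
    have "ln (2 * real lam / \<Delta>min) \<le> X' / 18" using Xln by simp
    hence "exp (ln (2 * real lam / \<Delta>min)) \<le> exp (X' / 18)" by simp
    hence "2 * real lam / \<Delta>min \<le> exp (X' / 18)" using pos by simp
    hence "inverse (exp (X' / 18)) \<le> inverse (2 * real lam / \<Delta>min)"
      using pos by (intro le_imp_inverse_le) auto
    thus ?thesis by (simp add: exp_minus inverse_eq_divide)
  qed
  define \<delta> where "\<delta> = min (\<Delta>min / 2) (X' / 12)"
  have \<delta>pos: "\<delta> > 0" unfolding \<delta>_def using assms(9) X48 by simp
  define c where "c = 2 * X'"
  show ?thesis
  proof (cases "X' \<le> real x0")
    case True
    have "hitting_time X X' \<omega> = 0" if "\<omega> \<in> space M" for \<omega>
    proof -
      have "\<exists>t. X' \<le> real (X t \<omega>)" using True assms(13)[OF that] by metis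
      moreover have "(LEAST t. X' \<le> real (X t \<omega>)) = 0"
        using True assms(13)[OF that] by (intro Least_eq_0) simp
      ultimately show ?thesis unfolding hitting_time_def by simp
    qed
    hence "(\<integral>\<^sup>+ \<omega>. hitting_time X X' \<omega> \<partial>M) = 0"
      by (simp add: nn_integral_cong[where v="\<lambda>_. 0"])
    then show ?thesis by simp
  next
    case False
    hence x0X: "real x0 < X'" by simp
    define A where "A t = {\<omega>\<in>space M. \<forall>s\<le>t. real (X s \<omega>) < X'}" for t
    have AF: "A t \<in> sets (F t)" for t
    proof -
      have "A t = (\<Inter>s\<in>{..t}. X s -` {k. real k < X'} \<inter> space (F t))"
        unfolding A_def spF by auto
      also have "\<dots> \<in> sets (F t)"
        by (intro sets.finite_INT measurable_sets[OF XF]) auto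
      finally show ?thesis .
    qed
    have AM[measurable]: "A t \<in> sets M" for t
      using AF subalg[of t] by (auto simp: subalgebra_def)
    have cpos: "c > 0" unfolding c_def using X48 by simp
    have key: "(\<integral>\<omega>. indicator (A t) \<omega> * (real (X t \<omega>) + \<delta>) \<partial>M)
        \<le> (\<integral>\<omega>. indicator (A t) \<omega> * min (real (X (Suc t) \<omega>)) c \<partial>M)" for t
    proof -
      interpret S: sigma_finite_subalgebra M "F t" by (rule sfs)
      define CE where "CE k = real_cond_exp M (F t) (\<lambda>\<omega>. indicator {\<omega>. X (Suc t) \<omega> = k} \<omega>)" for k
      define q where "q \<omega> = capped_binomial_pmf mu lam ((real (X t \<omega>) + \<Delta> t \<omega>) / (exp 1 * real mu))" for \<omega>
      have CEm[measurable]: "CE k \<in> borel_measurable M" for k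
        unfolding CE_def by (rule borel_measurable_cond_exp2)
      have AEq: "AE \<omega> in M. \<forall>k. CE k \<omega> = pmf (q \<omega>) k"
        unfolding AE_all_countable CE_def q_def using assms(14) by blast
      have indF: "(indicator (A t) :: 'a \<Rightarrow> real) \<in> borel_measurable (F t)" using AF by simp
      have step1: "(\<integral>\<^sup>+\<omega>. ennreal (indicator (A t) \<omega> * indicator {\<omega>. X (Suc t) \<omega> = k} \<omega>) \<partial>M)
          = (\<integral>\<^sup>+\<omega>. ennreal (indicator (A t) \<omega> * CE k \<omega>) \<partial>M)" for k
      proof -
        have gm: "(\<lambda>\<omega>. indicator {\<omega>. X (Suc t) \<omega> = k} \<omega> :: real) \<in> borel_measurable M" by measurable
        have int1: "integrable M (\<lambda>\<omega>. indicator (A t) \<omega> * indicator {\<omega>. X (Suc t) \<omega> = k} \<omega> :: real)"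
          by (rule P.integrable_const_bound[where B=1]) (auto simp: indicator_def)
        note r = S.real_cond_exp_intg[OF int1 indF gm]
        have "(\<integral>\<^sup>+\<omega>. ennreal (indicator (A t) \<omega> * indicator {\<omega>. X (Suc t) \<omega> = k} \<omega>) \<partial>M)
            = ennreal (\<integral>\<omega>. indicator (A t) \<omega> * indicator {\<omega>. X (Suc t) \<omega> = k} \<omega> \<partial>M)"
          by (rule nn_integral_eq_integral[OF int1]) auto
        also have "\<dots> = ennreal (\<integral>\<omega>. indicator (A t) \<omega> * CE k \<omega> \<partial>M)"
          using r(2) unfolding CE_def by simp
        also have "\<dots> = (\<integral>\<^sup>+\<omega>. ennreal (indicator (A t) \<omega> * CE k \<omega>) \<partial>M)"
        proof (rule nn_integral_eq_integral[symmetric])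
          show "integrable M (\<lambda>\<omega>. indicator (A t) \<omega> * CE k \<omega>)" using r(1) unfolding CE_def .
          show "AE \<omega> in M. 0 \<le> indicator (A t) \<omega> * CE k \<omega>"
            using AEq by eventually_elim simp
        qed
        finally show ?thesis .
      qed
      have pt1: "ennreal (indicator (A t) \<omega> * min (real (X (Suc t) \<omega>)) c)
          = (\<Sum>k. ennreal (min (real k) c) * ennreal (indicator (A t) \<omega> * indicator {\<omega>. X (Suc t) \<omega> = k} \<omega>))" for \<omega>
      proof -
        have "(\<Sum>k. ennreal (min (real k) c) * ennreal (indicator (A t) \<omega> * indicator {\<omega>. X (Suc t) \<omega> = k} \<omega>))
            = (\<Sum>k\<in>{X (Suc t) \<omega>}. ennreal (min (real k) c) * ennreal (indicator (A t) \<omega> * indicator {\<omega>. X (Suc t) \<omega> = k} \<omega>))"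
          by (rule suminf_finite) auto
        then show ?thesis
          by (cases "\<omega> \<in> A t") (auto simp: indicator_def)
      qed
      have "(\<integral>\<^sup>+\<omega>. ennreal (indicator (A t) \<omega> * min (real (X (Suc t) \<omega>)) c) \<partial>M)
          = (\<Sum>k. ennreal (min (real k) c) * (\<integral>\<^sup>+\<omega>. ennreal (indicator (A t) \<omega> * indicator {\<omega>. X (Suc t) \<omega> = k} \<omega>) \<partial>M))"
        unfolding pt1
        by (subst nn_integral_suminf) (measurable, intro suminf_cong nn_integral_cmult, measurable)
      also have "\<dots> = (\<Sum>k. ennreal (min (real k) c) * (\<integral>\<^sup>+\<omega>. ennreal (indicator (A t) \<omega> * CE k \<omega>) \<partial>M))"
        by (simp only: step1)
      also have "\<dots> = (\<integral>\<^sup>+\<omega>. (\<Sum>k. ennreal (min (real k) c) * ennreal (indicator (A t) \<omega> * CE k \<omega>)) \<partial>M)"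
        by (subst nn_integral_suminf) (measurable, intro suminf_cong nn_integral_cmult[symmetric], measurable)
      finally have eqA: "(\<integral>\<^sup>+\<omega>. ennreal (indicator (A t) \<omega> * min (real (X (Suc t) \<omega>)) c) \<partial>M)
          = (\<integral>\<^sup>+\<omega>. (\<Sum>k. ennreal (min (real k) c) * ennreal (indicator (A t) \<omega> * CE k \<omega>)) \<partial>M)" .
      have "(\<integral>\<^sup>+\<omega>. ennreal (indicator (A t) \<omega> * (real (X t \<omega>) + \<delta>)) \<partial>M)
          \<le> (\<integral>\<^sup>+\<omega>. (\<Sum>k. ennreal (min (real k) c) * ennreal (indicator (A t) \<omega> * CE k \<omega>)) \<partial>M)"
      proof (rule nn_integral_mono_AE)
        show "AE \<omega> in M. ennreal (indicator (A t) \<omega> * (real (X t \<omega>) + \<delta>))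
            \<le> (\<Sum>k. ennreal (min (real k) c) * ennreal (indicator (A t) \<omega> * CE k \<omega>))"
          using AEq
        proof eventually_elim
          case (elim \<omega>)
          show ?case
          proof (cases "\<omega> \<in> A t")
            case False then show ?thesis by simp
          next
            case True
            hence \<omega>M: "\<omega> \<in> space M" and xlt: "real (X t \<omega>) < X'" unfolding A_def by auto
            have "(\<Sum>k. ennreal (min (real k) c) * ennreal (indicator (A t) \<omega> * CE k \<omega>))
                = (\<Sum>k. ennreal (min (real k) c * pmf (q \<omega>) k))"
              using True elim cpos by (intro suminf_cong) (simp add: ennreal_mult[symmetric])
            also have "\<dots> = ennreal (measure_pmf.expectation (q \<omega>) (\<lambda>k. min (real k) c))"
              by (rule pmf_suminf_expect[where B=c]) (use cpos in auto)
            finally have eq: "(\<Sum>k. ennreal (min (real k) c) * ennreal (indicator (A t) \<omega> * CE k \<omega>))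
                = ennreal (measure_pmf.expectation (q \<omega>) (\<lambda>k. min (real k) c))" .
            have "real (X t \<omega>) + \<delta> \<le> measure_pmf.expectation (q \<omega>) (\<lambda>k. min (real k) c)"
              unfolding q_def c_def \<delta>_def
              by (rule drift_pmf[OF xlt assms(9) assms(11)[OF \<omega>M] assms(12)[OF \<omega>M] assms(8) assms(6)
                    X48 Xmu tail lam3])
            then show ?thesis using True eq by (simp add: ennreal_leI)
          qed
        qed
      qed
      also have "\<dots> = (\<integral>\<^sup>+\<omega>. ennreal (indicator (A t) \<omega> * min (real (X (Suc t) \<omega>)) c) \<partial>M)"
        by (rule eqA[symmetric])
      finally have le: "(\<integral>\<^sup>+\<omega>. ennreal (indicator (A t) \<omega> * (real (X t \<omega>) + \<delta>)) \<partial>M)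
          \<le> (\<integral>\<^sup>+\<omega>. ennreal (indicator (A t) \<omega> * min (real (X (Suc t) \<omega>)) c) \<partial>M)" .
      have int2: "integrable M (\<lambda>\<omega>. indicator (A t) \<omega> * min (real (X (Suc t) \<omega>)) c)"
        by (rule P.integrable_const_bound[where B=c]) (use cpos in \<open>auto simp: indicator_def\<close>)
      have int3: "integrable M (\<lambda>\<omega>. indicator (A t) \<omega> * (real (X t \<omega>) + \<delta>))"
      proof (rule P.integrable_const_bound[where B="X' + \<delta>"])
        show "AE \<omega> in M. norm (indicator (A t) \<omega> * (real (X t \<omega>) + \<delta>)) \<le> X' + \<delta>"
        proof (rule AE_I2)
          fix \<omega> assume "\<omega> \<in> space M"
          show "norm (indicator (A t) \<omega> * (real (X t \<omega>) + \<delta>)) \<le> X' + \<delta>"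
            using \<delta>pos X48 by (cases "\<omega> \<in> A t") (auto simp: A_def)
        qed
      qed measurable
      have "ennreal (\<integral>\<omega>. indicator (A t) \<omega> * (real (X t \<omega>) + \<delta>) \<partial>M)
          \<le> ennreal (\<integral>\<omega>. indicator (A t) \<omega> * min (real (X (Suc t) \<omega>)) c \<partial>M)"
      proof -
        have e2: "(\<integral>\<^sup>+\<omega>. ennreal (indicator (A t) \<omega> * min (real (X (Suc t) \<omega>)) c) \<partial>M)
            = ennreal (\<integral>\<omega>. indicator (A t) \<omega> * min (real (X (Suc t) \<omega>)) c \<partial>M)"
          by (rule nn_integral_eq_integral[OF int2]) (use cpos in auto)
        have e3: "(\<integral>\<^sup>+\<omega>. ennreal (indicator (A t) \<omega> * (real (X t \<omega>) + \<delta>)) \<partial>M)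
            = ennreal (\<integral>\<omega>. indicator (A t) \<omega> * (real (X t \<omega>) + \<delta>) \<partial>M)"
          by (rule nn_integral_eq_integral[OF int3]) (use \<delta>pos in auto)
        show ?thesis using le unfolding e2 e3 .
      qed
      moreover have "0 \<le> (\<integral>\<omega>. indicator (A t) \<omega> * min (real (X (Suc t) \<omega>)) c \<partial>M)"
        by (rule integral_nonneg_AE) (use cpos in auto)
      ultimately show ?thesis by simp
    qed
    define V where "V t \<omega> = (if \<forall>s<t. real (X s \<omega>) < X' then min (real (X t \<omega>)) c else c)" for t \<omega>
    have VM[measurable]: "V t \<in> borel_measurable M" for t unfolding V_def by measurable
    have Vbd: "0 \<le> V t \<omega> \<and> V t \<omega> \<le> c" for t \<omega> using cpos unfolding V_def by auto
    have Vint: "integrable M (V t)" for t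
      by (rule P.integrable_const_bound[where B=c]) (use Vbd in auto)
    have V0: "(\<integral>\<omega>. V 0 \<omega> \<partial>M) = real x0"
    proof -
      have "(\<integral>\<omega>. V 0 \<omega> \<partial>M) = (\<integral>\<omega>. real x0 \<partial>M)"
        by (rule Bochner_Integration.integral_cong) (use x0X assms(13) in \<open>auto simp: V_def c_def\<close>)
      then show ?thesis by (simp add: P.prob_space)
    qed
    have Vn: "(\<integral>\<omega>. V n \<omega> \<partial>M) \<le> c" for n
    proof -
      have "(\<integral>\<omega>. V n \<omega> \<partial>M) \<le> (\<integral>\<omega>. c \<partial>M)"
        by (rule Bochner_Integration.integral_mono) (use Vint Vbd in auto)
      then show ?thesis by (simp add: P.prob_space)
    qed
    have Vstep: "\<delta> * measure M (A t) \<le> (\<integral>\<omega>. V (Suc t) \<omega> \<partial>M) - (\<integral>\<omega>. V t \<omega> \<partial>M)" for t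
    proof -
      define g where "g \<omega> = indicator (A t) \<omega> * min (real (X (Suc t) \<omega>)) c" for \<omega>
      define h where "h \<omega> = indicator (A t) \<omega> * (real (X t \<omega>) + \<delta>)" for \<omega>
      have int2: "integrable M g" unfolding g_def
        by (rule P.integrable_const_bound[where B=c]) (use cpos in \<open>auto simp: indicator_def\<close>)
      have int3: "integrable M h" unfolding h_def
      proof (rule P.integrable_const_bound[where B="X' + \<delta>"])
        show "AE \<omega> in M. norm (indicator (A t) \<omega> * (real (X t \<omega>) + \<delta>)) \<le> X' + \<delta>"
        proof (rule AE_I2)
          fix \<omega> assume "\<omega> \<in> space M"
          show "norm (indicator (A t) \<omega> * (real (X t \<omega>) + \<delta>)) \<le> X' + \<delta>"
            using \<delta>pos X48 by (cases "\<omega> \<in> A t") (auto simp: A_def)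
        qed
      qed measurable
      have intA: "integrable M (\<lambda>\<omega>. \<delta> * indicator (A t) \<omega> :: real)"
        by (rule P.integrable_const_bound[where B=\<delta>]) (use \<delta>pos in \<open>auto simp: indicator_def\<close>)
      have "(\<integral>\<omega>. g \<omega> - h \<omega> + \<delta> * indicator (A t) \<omega> \<partial>M) \<le> (\<integral>\<omega>. V (Suc t) \<omega> - V t \<omega> \<partial>M)"
      proof (rule Bochner_Integration.integral_mono)
        show "integrable M (\<lambda>\<omega>. g \<omega> - h \<omega> + \<delta> * indicator (A t) \<omega>)"
          using int2 int3 intA by auto
        show "integrable M (\<lambda>\<omega>. V (Suc t) \<omega> - V t \<omega>)" using Vint by auto
        fix \<omega> assume \<omega>M: "\<omega> \<in> space M"
        show "g \<omega> - h \<omega> + \<delta> * indicator (A t) \<omega> \<le> V (Suc t) \<omega> - V t \<omega>"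
        proof (cases "\<forall>s<t. real (X s \<omega>) < X'")
          case False
          hence "\<omega> \<notin> A t" "\<not> (\<forall>s<Suc t. real (X s \<omega>) < X')" unfolding A_def
            by (auto dest: less_imp_le less_SucI)
          then show ?thesis using False unfolding g_def h_def V_def by (simp only: if_False indicator_simps) simp
        next
          case True
          show ?thesis
          proof (cases "real (X t \<omega>) < X'")
            case True2: True
            have "\<forall>s<Suc t. real (X s \<omega>) < X'" using True True2 less_Suc_eq by auto
            moreover have "\<omega> \<in> A t" using True True2 \<omega>M unfolding A_def
              by (auto simp: le_less)
            moreover have "min (real (X t \<omega>)) c = real (X t \<omega>)" using True2 X48 unfolding c_def by simp
            ultimately show ?thesis using True unfolding g_def h_def V_def by (simp only: if_True indicator_simps) simp
          next
            case False2: False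
            have "\<not> (\<forall>s<Suc t. real (X s \<omega>) < X')" using False2 by auto
            moreover have "\<omega> \<notin> A t" using False2 unfolding A_def by auto
            moreover have "min (real (X t \<omega>)) c \<le> c" by simp
            ultimately show ?thesis using True unfolding g_def h_def V_def by (simp only: if_True if_False indicator_simps) simp
          qed
        qed
      qed
      also have "(\<integral>\<omega>. V (Suc t) \<omega> - V t \<omega> \<partial>M) = (\<integral>\<omega>. V (Suc t) \<omega> \<partial>M) - (\<integral>\<omega>. V t \<omega> \<partial>M)"
        by (rule Bochner_Integration.integral_diff[OF Vint Vint])
      also have "(\<integral>\<omega>. g \<omega> - h \<omega> + \<delta> * indicator (A t) \<omega> \<partial>M)
          = (\<integral>\<omega>. g \<omega> \<partial>M) - (\<integral>\<omega>. h \<omega> \<partial>M) + \<delta> * measure M (A t)"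
      proof -
        have "(\<integral>\<omega>. g \<omega> - h \<omega> + \<delta> * indicator (A t) \<omega> \<partial>M)
            = (\<integral>\<omega>. g \<omega> - h \<omega> \<partial>M) + (\<integral>\<omega>. \<delta> * indicator (A t) \<omega> \<partial>M)"
          using int2 int3 intA by (intro Bochner_Integration.integral_add) auto
        also have "(\<integral>\<omega>. g \<omega> - h \<omega> \<partial>M) = (\<integral>\<omega>. g \<omega> \<partial>M) - (\<integral>\<omega>. h \<omega> \<partial>M)"
          using int2 int3 by (rule Bochner_Integration.integral_diff)
        also have "(\<integral>\<omega>. \<delta> * indicator (A t) \<omega> \<partial>M) = \<delta> * measure M (A t)"
          by (simp add: P.emeasure_finite)
        finally show ?thesis .
      qed
      finally have "(\<integral>\<omega>. g \<omega> \<partial>M) - (\<integral>\<omega>. h \<omega> \<partial>M) + \<delta> * measure M (A t)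
          \<le> (\<integral>\<omega>. V (Suc t) \<omega> \<partial>M) - (\<integral>\<omega>. V t \<omega> \<partial>M)" .
      moreover have "(\<integral>\<omega>. h \<omega> \<partial>M) \<le> (\<integral>\<omega>. g \<omega> \<partial>M)"
        using key[of t] unfolding g_def h_def .
      ultimately show ?thesis by linarith
    qed
    define B where "B = (c - real x0) / \<delta>"
    have sumb: "(\<Sum>t<n. measure M (A t)) \<le> B" for n
    proof -
      have "\<delta> * (\<Sum>t<n. measure M (A t)) = (\<Sum>t<n. \<delta> * measure M (A t))"
        by (simp add: sum_distrib_left)
      also have "\<dots> \<le> (\<Sum>t<n. (\<integral>\<omega>. V (Suc t) \<omega> \<partial>M) - (\<integral>\<omega>. V t \<omega> \<partial>M))"
        by (intro sum_mono Vstep)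
      also have "\<dots> = (\<integral>\<omega>. V n \<omega> \<partial>M) - (\<integral>\<omega>. V 0 \<omega> \<partial>M)"
        by (rule sum_lessThan_telescope)
      also have "\<dots> \<le> c - real x0" using Vn[of n] V0 by simp
      finally show ?thesis unfolding B_def using \<delta>pos by (simp add: field_simps mult.commute)
    qed
    have "(\<integral>\<^sup>+ \<omega>. hitting_time X X' \<omega> \<partial>M) = (\<integral>\<^sup>+ \<omega>. (\<Sum>t. indicator (A t) \<omega>) \<partial>M)"
    proof (rule nn_integral_cong)
      fix \<omega> assume "\<omega> \<in> space M"
      then show "hitting_time X X' \<omega> = (\<Sum>t. indicator (A t) \<omega>)"
        unfolding hitting_sum A_def by (simp add: indicator_def)
    qed
    also have "\<dots> = (\<Sum>t. emeasure M (A t))"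
      by (subst nn_integral_suminf) auto
    also have "\<dots> = (\<Sum>t. ennreal (measure M (A t)))"
      by (simp add: P.emeasure_eq_measure)
    also have "\<dots> \<le> ennreal B"
    proof (rule suminf_le_const)
      show "summable (\<lambda>t. ennreal (measure M (A t)))" by simp
      fix n show "(\<Sum>t<n. ennreal (measure M (A t))) \<le> ennreal B"
        using sumb[of n] by (simp add: ennreal_leI)
    qed
    also have "\<dots> \<le> ennreal (max 24 ((4 * X' - 2 * real x0) / \<Delta>min))"
    proof (rule ennreal_leI)
      show "B \<le> max 24 ((4 * X' - 2 * real x0) / \<Delta>min)"
      proof (cases "\<Delta>min / 2 \<le> X' / 12")
        case True
        hence dd: "\<delta> = \<Delta>min / 2" unfolding \<delta>_def by simp
        have "B = (2 * X' - real x0) / (\<Delta>min / 2)" unfolding B_def c_def dd by simp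
        also have "\<dots> = (4 * X' - 2 * real x0) / \<Delta>min" by (simp add: field_simps)
        finally have "B = (4 * X' - 2 * real x0) / \<Delta>min" .
        then show ?thesis by simp
      next
        case False
        hence dd: "\<delta> = X' / 12" unfolding \<delta>_def by simp
        have "B = 12 * (2 * X' - real x0) / X'" unfolding B_def c_def dd using X48 by (simp add: field_simps)
        also have "\<dots> \<le> 24" using X48 by (simp add: field_simps)
        finally show ?thesis by simp
      qed
    qed
    finally show ?thesis .
  qed
qed


end
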